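(* Let $k\ge1$ and $n_1,\dots,n_k\in\mathbb{Z}$. The word problem for \[ G=\left\langle a,t,b_1,\dots,b_k \;\middle|\; at=ta,\; b_1^{-1}tb_1=a^{n_1}t,\;\dots,\; b_k^{-1}tb_k=a^{n_k}t\right\rangle \] is solvable. *)

theory Defs
  imports Main "HOL-Library.Nat_Bijection"
begin

datatype recf = Z | S | Id nat | Cn recf "recf list" | Pr recf recf | Mn recf

text \<open>Big-step (deterministic) evaluation of mu-recursive function codes;
  argument lists are untyped (arity is not checked), undefined cases simply
  have no evaluation.\<close>
inductive eval :: "recf \<Rightarrow> nat list \<Rightarrow> nat \<Rightarrow> bool" where
  eval_Z: "eval Z xs 0"
| eval_S: "eval S (x # xs) (Suc x)"
| eval_Id: "i < length xs \<Longrightarrow> eval (Id i) xs (xs ! i)"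
| eval_Cn: "list_all2 (\<lambda>g y. eval g xs y) gs ys \<Longrightarrow> eval f ys z \<Longrightarrow> eval (Cn f gs) xs z"
| eval_Pr0: "eval g xs y \<Longrightarrow> eval (Pr g h) (0 # xs) y"
| eval_PrS: "eval (Pr g h) (n # xs) y \<Longrightarrow> eval h (n # y # xs) z \<Longrightarrow> eval (Pr g h) (Suc n # xs) z"
| eval_Mn: "eval f (y # xs) 0 \<Longrightarrow> (\<forall>m<y. \<exists>z. 0 < z \<and> eval f (m # xs) z) \<Longrightarrow> eval (Mn f) xs y"

definition decidable_set :: "nat set \<Rightarrow> bool" where
  "decidable_set P \<longleftrightarrow> (\<exists>f. \<forall>x. eval f [x] (if x \<in> P then 1 else 0))"

text \<open>A letter (g, False) is generator g, (g, True) is its inverse.\<close>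
type_synonym letter = "nat \<times> bool"
type_synonym word = "letter list"

definition inv_letter :: "letter \<Rightarrow> letter" where
  "inv_letter x = (fst x, \<not> snd x)"

inductive pres_eq :: "word set \<Rightarrow> word \<Rightarrow> word \<Rightarrow> bool" for R where
  pe_refl: "pres_eq R w w"
| pe_sym: "pres_eq R u v \<Longrightarrow> pres_eq R v u"
| pe_trans: "pres_eq R u v \<Longrightarrow> pres_eq R v w \<Longrightarrow> pres_eq R u w"
| pe_cancel: "pres_eq R (u @ [x, inv_letter x] @ v) (u @ v)"
| pe_rel: "r \<in> R \<Longrightarrow> pres_eq R (u @ r @ v) (u @ v)"

definition encode_word :: "word \<Rightarrow> nat" where
  "encode_word w = list_encode (map (\<lambda>(g, b). prod_encode (g, if b then 1 else 0)) w)"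

definition word_problem_solvable :: "nat \<Rightarrow> word set \<Rightarrow> bool" where
  "word_problem_solvable m R \<longleftrightarrow>
     decidable_set (encode_word ` {w. (\<forall>x\<in>set w. fst x < m) \<and> pres_eq R w []})"

text \<open>Generators: a = 0, t = 1, b_i = i + 1 for i = 1..k.\<close>
definition apow :: "int \<Rightarrow> word" where
  "apow n = (if 0 \<le> n then replicate (nat n) (0, False) else replicate (nat (- n)) (0, True))"

text \<open>Relators: a t a^-1 t^-1, and b_i^-1 t b_i t^-1 a^(-n_i) for i = 1..k
  (encoding at = ta and b_i^-1 t b_i = a^(n_i) t).\<close>
definition G_relators :: "nat \<Rightarrow> (nat \<Rightarrow> int) \<Rightarrow> word set" where
  "G_relators k n =
     {[(0, False), (1, False), (0, True), (1, True)]} \<union>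
     {[(i + 1, True), (1, False), (i + 1, False), (1, True)] @ apow (- n i) | i. 1 \<le> i \<and> i \<le> k}"

end

theory Submission
  imports Defs
begin


definition rf :: "nat \<Rightarrow> (nat list \<Rightarrow> nat) \<Rightarrow> bool" where
  "rf n f \<longleftrightarrow> (\<exists>c. \<forall>xs. length xs = n \<longrightarrow> eval c xs (f xs))"

lemma rf_proj: "i < n \<Longrightarrow> rf n (\<lambda>xs. xs ! i)"
  unfolding rf_def by (rule exI[of _ "Id i"]) (auto intro: eval_Id)

lemma rf_zero: "rf n (\<lambda>xs. 0)"
  unfolding rf_def by (rule exI[of _ Z]) (auto intro: eval_Z)

lemma eval_Id': "i < length xs \<Longrightarrow> y = xs ! i \<Longrightarrow> eval (Id i) xs y"
  using eval_Id by simp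

lemma eval_Cn1: "eval g xs y \<Longrightarrow> eval f [y] z \<Longrightarrow> eval (Cn f [g]) xs z"
  by (rule eval_Cn[of _ _ "[y]"]) auto

lemma eval_Cn2: "eval g1 xs y1 \<Longrightarrow> eval g2 xs y2 \<Longrightarrow> eval f [y1, y2] z \<Longrightarrow> eval (Cn f [g1, g2]) xs z"
  by (rule eval_Cn[of _ _ "[y1, y2]"]) auto

lemma rf_comp1: "rf 1 h \<Longrightarrow> rf n f \<Longrightarrow> rf n (\<lambda>xs. h [f xs])"
  unfolding rf_def by (metis eval_Cn1 length_Cons list.size(3) One_nat_def)

lemma rf_comp2: "rf 2 h \<Longrightarrow> rf n f \<Longrightarrow> rf n g \<Longrightarrow> rf n (\<lambda>xs. h [f xs, g xs])"
proof -
  assume "rf 2 h" "rf n f" "rf n g"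
  then obtain ch cf cg where "\<forall>xs. length xs = 2 \<longrightarrow> eval ch xs (h xs)"
    "\<forall>xs. length xs = n \<longrightarrow> eval cf xs (f xs)" "\<forall>xs. length xs = n \<longrightarrow> eval cg xs (g xs)"
    unfolding rf_def by blast
  then show ?thesis unfolding rf_def
    by (intro exI[of _ "Cn ch [cf, cg]"]) (auto intro: eval_Cn2)
qed

lemma rf_Suc: "rf 1 (\<lambda>xs. Suc (hd xs))"
  unfolding rf_def
  by (rule exI[of _ S]) (auto simp: length_Suc_conv intro: eval_S)

lemma rf_suc: "rf n f \<Longrightarrow> rf n (\<lambda>xs. Suc (f xs))"
  using rf_comp1[OF rf_Suc] by simp

lemma rf_const: "rf n (\<lambda>xs. c)"
  by (induction c) (auto intro: rf_zero rf_suc)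

lemma eval_Pr_rec:
  assumes g: "eval g xs vv" and h: "\<And>m y. eval h (m # y # xs) (H m y)"
  shows "eval (Pr g h) (m # xs) (rec_nat vv H m)"
proof (induction m)
  case 0 then show ?case using g by (auto intro: eval_Pr0)
next
  case (Suc m) then show ?case using h by (auto intro: eval_PrS)
qed

lemma code_add: "eval (Pr (Id 0) (Cn S [Id 1])) [m, x] (m + x)"
proof -
  have "eval (Pr (Id 0) (Cn S [Id 1])) (m # [x]) (rec_nat x (\<lambda>m y. Suc y) m)"
    by (rule eval_Pr_rec[where vv=x and H="\<lambda>m y. Suc y"])
       (auto intro!: eval_Id' eval_Cn1 eval_S)
  moreover have "rec_nat x (\<lambda>m y. Suc y) m = m + x" by (induction m) auto
  ultimately show ?thesis by simp
qed

definition "cadd = Pr (Id 0) (Cn S [Id 1])"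
lemma code_add': "z = m + x \<Longrightarrow> eval cadd [m, x] z"
  using code_add by (simp add: cadd_def)

lemma code_mult: "eval (Pr Z (Cn cadd [Id 1, Id 2])) [m, x] (m * x)"
proof -
  have "eval (Pr Z (Cn cadd [Id 1, Id 2])) (m # [x]) (rec_nat 0 (\<lambda>m y. y + x) m)"
    by (rule eval_Pr_rec[where vv=0 and H="\<lambda>m y. y + x"])
       (auto intro!: eval_Z eval_Id' eval_Cn2 code_add')
  moreover have "rec_nat 0 (\<lambda>m y. y + x) m = m * x" by (induction m) auto
  ultimately show ?thesis by simp
qed

definition "cpred = Pr Z (Id 0)"

lemma codepred: "eval cpred [m] (m - 1)"
proof -
  have "eval (Pr Z (Id 0)) (m # []) (rec_nat 0 (\<lambda>m y. m) m)"
    by (rule eval_Pr_rec[where vv=0 and H="\<lambda>m y. m"])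
       (auto intro!: eval_Z eval_Id')
  moreover have "rec_nat 0 (\<lambda>m y. m) m = m - 1" by (cases m) auto
  ultimately show ?thesis by (simp add: cpred_def)
qed
lemma codepred': "z = m - 1 \<Longrightarrow> eval cpred [m] z"
  using codepred by simp

lemma code_sub: "eval (Pr (Id 0) (Cn cpred [Id 1])) [m, x] (x - m)"
proof -
  have "eval (Pr (Id 0) (Cn cpred [Id 1])) (m # [x]) (rec_nat x (\<lambda>m y. y - 1) m)"
    by (rule eval_Pr_rec[where vv=x and H="\<lambda>m y. y - 1"])
       (auto intro!: eval_Id' eval_Cn1 codepred')
  moreover have "rec_nat x (\<lambda>m y. y - 1) m = x - m" by (induction m) auto
  ultimately show ?thesis by simp
qed

lemma code_tri: "eval (Pr Z (Cn cadd [Cn S [Id 0], Id 1])) [m] (triangle m)"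
proof -
  have "eval (Pr Z (Cn cadd [Cn S [Id 0], Id 1])) (m # []) (rec_nat 0 (\<lambda>m y. Suc m + y) m)"
    by (rule eval_Pr_rec[where vv=0 and H="\<lambda>m y. Suc m + y"])
       (auto intro!: eval_Z eval_Id' eval_Cn2 eval_Cn1 eval_S code_add')
  moreover have "rec_nat 0 (\<lambda>m y. Suc m + y) m = triangle m" by (induction m) auto
  ultimately show ?thesis by simp
qed

lemma len2: "length xs = 2 \<Longrightarrow> xs = [xs!0, xs!1]"
  by (cases xs; cases "tl xs") auto
lemma len1: "length xs = 1 \<Longrightarrow> xs = [xs!0]"
  by (cases xs) auto

lemma rf_add: "rf n f \<Longrightarrow> rf n g \<Longrightarrow> rf n (\<lambda>xs. f xs + g xs)"
proof -
  have "rf 2 (\<lambda>xs. xs!0 + xs!1)" unfolding rf_def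
    by (metis code_add len2)
  then show "rf n f \<Longrightarrow> rf n g \<Longrightarrow> rf n (\<lambda>xs. f xs + g xs)"
    using rf_comp2[of "\<lambda>xs. xs!0 + xs!1"] by simp
qed

lemma rf_mult: "rf n f \<Longrightarrow> rf n g \<Longrightarrow> rf n (\<lambda>xs. f xs * g xs)"
proof -
  have "rf 2 (\<lambda>xs. xs!0 * xs!1)" unfolding rf_def
    by (metis code_mult len2)
  then show "rf n f \<Longrightarrow> rf n g \<Longrightarrow> rf n (\<lambda>xs. f xs * g xs)"
    using rf_comp2[of "\<lambda>xs. xs!0 * xs!1"] by simp
qed

lemma rf_sub: "rf n f \<Longrightarrow> rf n g \<Longrightarrow> rf n (\<lambda>xs. f xs - g xs)"
proof -
  have "rf 2 (\<lambda>xs. xs!1 - xs!0)" unfolding rf_def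
    by (metis code_sub len2)
  then show "rf n f \<Longrightarrow> rf n g \<Longrightarrow> rf n (\<lambda>xs. f xs - g xs)"
    using rf_comp2[of "\<lambda>xs. xs!1 - xs!0" n g f] by simp
qed

lemma rf_tri: "rf n f \<Longrightarrow> rf n (\<lambda>xs. triangle (f xs))"
proof -
  have "rf 1 (\<lambda>xs. triangle (xs!0))" unfolding rf_def
    by (metis code_tri len1)
  then show "rf n f \<Longrightarrow> rf n (\<lambda>xs. triangle (f xs))"
    using rf_comp1[of "\<lambda>xs. triangle (xs!0)"] by simp
qed

lemma rf_mn:
  assumes "rf (Suc n) f" and ex: "\<And>ys. length ys = n \<Longrightarrow> \<exists>y. f (y # ys) = 0"
  shows "rf n (\<lambda>ys. LEAST y. f (y # ys) = 0)"
proof -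
  obtain c where c: "\<And>xs. length xs = Suc n \<Longrightarrow> eval c xs (f xs)"
    using assms(1) unfolding rf_def by blast
  show ?thesis unfolding rf_def
  proof (intro exI[of _ "Mn c"] allI impI)
    fix ys :: "nat list" assume l: "length ys = n"
    let ?y = "LEAST y. f (y # ys) = 0"
    have "f (?y # ys) = 0" using ex[OF l] by (rule LeastI_ex)
    moreover have "\<forall>m<?y. 0 < f (m # ys)" using not_less_Least by blast
    ultimately show "eval (Mn c) ys ?y"
      using c l by (intro eval_Mn) (auto, metis length_Cons)
  qed
qed

lemma rf_iter:
  assumes "rf 1 (\<lambda>xs. st (hd xs))" "rf 1 (\<lambda>xs. ini (hd xs))"
  shows "rf 1 (\<lambda>xs. (st ^^ hd xs) (ini (hd xs)))"
proof -
  obtain cs ci where cs: "\<And>x. eval cs [x] (st x)" and ci: "\<And>x. eval ci [x] (ini x)"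
    using assms unfolding rf_def by (metis hd_Cons_tl length_0_conv list.sel(1) One_nat_def length_Cons list.size(3))
  have it: "eval (Pr ci (Cn cs [Id 1])) [m, x] ((st ^^ m) (ini x))" for m x
  proof (induction m)
    case 0 then show ?case using ci by (auto intro: eval_Pr0)
  next
    case (Suc m) then show ?case using cs by (auto intro!: eval_PrS eval_Cn1 eval_Id')
  qed
  show ?thesis unfolding rf_def
    apply (rule exI[of _ "Cn (Pr ci (Cn cs [Id 1])) [Id 0, Id 0]"])
    apply clarify
    apply (rule eval_Cn2)
      apply (rule eval_Id, simp)
     apply (rule eval_Id, simp)
    using it by (metis One_nat_def len1 list.sel(1) hd_conv_nth list.size(3) n_not_Suc_n)
qed

definition rfp :: "nat \<Rightarrow> (nat list \<Rightarrow> bool) \<Rightarrow> bool" where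
  "rfp n P \<longleftrightarrow> rf n (\<lambda>xs. if P xs then 1 else 0)"

lemma rfp_eq: "rf n f \<Longrightarrow> rf n g \<Longrightarrow> rfp n (\<lambda>xs. f xs = g xs)"
proof -
  assume "rf n f" "rf n g"
  then have "rf n (\<lambda>xs. 1 - ((f xs - g xs) + (g xs - f xs)))"
    by (intro rf_sub rf_add rf_const)
  moreover have "(\<lambda>xs. 1 - ((f xs - g xs) + (g xs - f xs))) = (\<lambda>xs. if f xs = g xs then 1 else 0)"
    by auto
  ultimately show ?thesis unfolding rfp_def by simp
qed

lemma rfp_less: "rf n f \<Longrightarrow> rf n g \<Longrightarrow> rfp n (\<lambda>xs. f xs < g xs)"
proof -
  assume "rf n f" "rf n g"
  then have "rf n (\<lambda>xs. 1 - (1 - (g xs - f xs)))"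
    by (intro rf_sub rf_add rf_const)
  moreover have "(\<lambda>xs. 1 - (1 - (g xs - f xs))) = (\<lambda>xs. if f xs < g xs then 1 else 0)"
    by auto
  ultimately show ?thesis unfolding rfp_def by simp
qed

lemma rfp_le: "rf n f \<Longrightarrow> rf n g \<Longrightarrow> rfp n (\<lambda>xs. f xs \<le> g xs)"
  using rfp_less[of n f "\<lambda>xs. Suc (g xs)"] rf_suc by (simp add: less_Suc_eq_le)

lemma rfp_not: "rfp n P \<Longrightarrow> rfp n (\<lambda>xs. \<not> P xs)"
proof -
  assume "rfp n P"
  then have "rf n (\<lambda>xs. 1 - (if P xs then 1 else 0))" unfolding rfp_def by (intro rf_sub rf_const)
  moreover have "(\<lambda>xs. 1 - (if P xs then 1 else 0)) = (\<lambda>xs. if \<not> P xs then 1 else (0::nat))" by auto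
  ultimately show ?thesis unfolding rfp_def by simp
qed

lemma rfp_conj: "rfp n P \<Longrightarrow> rfp n Q \<Longrightarrow> rfp n (\<lambda>xs. P xs \<and> Q xs)"
proof -
  assume "rfp n P" "rfp n Q"
  then have "rf n (\<lambda>xs. (if P xs then 1 else 0) * (if Q xs then 1 else 0))" unfolding rfp_def by (intro rf_mult)
  moreover have "(\<lambda>xs. (if P xs then 1 else 0) * (if Q xs then 1 else 0)) = (\<lambda>xs. if P xs \<and> Q xs then 1 else (0::nat))" by auto
  ultimately show ?thesis unfolding rfp_def by simp
qed

lemma rfp_disj: "rfp n P \<Longrightarrow> rfp n Q \<Longrightarrow> rfp n (\<lambda>xs. P xs \<or> Q xs)"
proof -
  assume "rfp n P" "rfp n Q"
  then have "rfp n (\<lambda>xs. \<not> (\<not> P xs \<and> \<not> Q xs))" by (intro rfp_not rfp_conj)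
  then show ?thesis by simp
qed

lemma rfp_iff: "rfp n P \<Longrightarrow> rfp n Q \<Longrightarrow> rfp n (\<lambda>xs. P xs = Q xs)"
proof -
  assume "rfp n P" "rfp n Q"
  then have "rfp n (\<lambda>xs. (P xs \<and> Q xs) \<or> (\<not> P xs \<and> \<not> Q xs))" by (intro rfp_not rfp_conj rfp_disj)
  moreover have "(\<lambda>xs. (P xs \<and> Q xs) \<or> (\<not> P xs \<and> \<not> Q xs)) = (\<lambda>xs. P xs = Q xs)" by auto
  ultimately show ?thesis by simp
qed

lemma rf_if: "rfp n P \<Longrightarrow> rf n f \<Longrightarrow> rf n g \<Longrightarrow> rf n (\<lambda>xs. if P xs then f xs else g xs)"
proof -
  assume "rfp n P" "rf n f" "rf n g"
  then have "rf n (\<lambda>xs. (if P xs then 1 else 0) * f xs + (1 - (if P xs then 1 else 0)) * g xs)"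
    unfolding rfp_def by (intro rf_mult rf_add rf_sub rf_const)
  moreover have "(\<lambda>xs. (if P xs then 1 else 0) * f xs + (1 - (if P xs then 1 else 0)) * g xs) = (\<lambda>xs. if P xs then f xs else g xs)" by auto
  ultimately show ?thesis by simp
qed

lemma rf_penc: "rf n f \<Longrightarrow> rf n g \<Longrightarrow> rf n (\<lambda>xs. prod_encode (f xs, g xs))"
  unfolding prod_encode_def by (simp add: rf_add rf_tri)

definition "dtri z = (LEAST s. Suc z - triangle (Suc s) = 0)"

lemma dtri_bounds: "triangle (dtri z) \<le> z \<and> z < triangle (Suc (dtri z))"
proof -
  have ex: "\<exists>s. Suc z - triangle (Suc s) = 0"
  proof
    have "z \<le> triangle z" by (induction z) auto
    then show "Suc z - triangle (Suc z) = 0" by simp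
  qed
  have 1: "Suc z - triangle (Suc (dtri z)) = 0" unfolding dtri_def by (rule LeastI_ex[OF ex])
  have 2: "triangle (dtri z) \<le> z"
  proof (cases "dtri z")
    case 0 then show ?thesis by simp
  next
    case (Suc s)
    then have "s < dtri z" by simp
    then have "Suc z - triangle (Suc s) \<noteq> 0" unfolding dtri_def using not_less_Least by blast
    then show ?thesis using Suc by simp
  qed
  show ?thesis using 1 2 by simp
qed

lemma prod_decode_dtri: "prod_decode z = (z - triangle (dtri z), dtri z - (z - triangle (dtri z)))"
proof -
  let ?s = "dtri z" let ?m = "z - triangle ?s"
  have b: "triangle ?s \<le> z" "z < triangle ?s + Suc ?s" using dtri_bounds[of z] by auto
  then have "?m \<le> ?s" by linarith
  then have "prod_encode (?m, ?s - ?m) = z" unfolding prod_encode_def using b by simp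
  then show ?thesis by (metis prod_encode_inverse)
qed

lemma rf_dtri: "rf n f \<Longrightarrow> rf n (\<lambda>xs. dtri (f xs))"
proof -
  have "rf (Suc 0) (\<lambda>ys. LEAST y. Suc (ys ! 0) - triangle (Suc y) = 0)"
  proof -
    have a: "rf (Suc (Suc 0)) (\<lambda>xs. Suc (xs ! 1) - triangle (Suc (xs ! 0)))"
      by (intro rf_sub rf_suc rf_tri rf_proj) auto
    have "rf (Suc 0) (\<lambda>ys. LEAST y. Suc ((y # ys) ! 1) - triangle (Suc ((y#ys) ! 0)) = 0)"
      apply (rule rf_mn[OF a])
    proof -
      fix ys :: "nat list"
      have "Suc (ys!0) - triangle (Suc (ys!0)) = 0"
        by simp
      then show "\<exists>y. Suc ((y # ys) ! 1) - triangle (Suc ((y # ys) ! 0)) = 0"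
        by (intro exI[of _ "ys!0"]) simp
    qed
    then show ?thesis by simp
  qed
  then have "rf 1 (\<lambda>ys. dtri (ys ! 0))" unfolding dtri_def by simp
  then show "rf n f \<Longrightarrow> rf n (\<lambda>xs. dtri (f xs))" using rf_comp1[of "\<lambda>ys. dtri (ys ! 0)"] by simp
qed

lemma rf_pfst: "rf n f \<Longrightarrow> rf n (\<lambda>xs. fst (prod_decode (f xs)))"
  unfolding prod_decode_dtri by (simp add: rf_sub rf_tri rf_dtri)

lemma rf_psnd: "rf n f \<Longrightarrow> rf n (\<lambda>xs. snd (prod_decode (f xs)))"
  unfolding prod_decode_dtri by (simp add: rf_sub rf_tri rf_dtri)

lemma rf_table: "rf n f \<Longrightarrow> rf n (\<lambda>xs. if f xs < K then T (f xs) else 0)"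
proof (induction K)
  case 0 then show ?case by (simp add: rf_const)
next
  case (Suc K)
  have "rf n (\<lambda>xs. if f xs = K then T K else (if f xs < K then T (f xs) else 0))"
    by (rule rf_if[OF rfp_eq rf_const Suc.IH[OF Suc.prems]]) (auto intro: Suc.prems rf_const)
  moreover have "(\<lambda>xs. if f xs = K then T K else (if f xs < K then T (f xs) else 0)) = (\<lambda>xs. if f xs < Suc K then T (f xs) else 0)"
    by (auto simp: less_Suc_eq)
  ultimately show ?case by simp
qed




lemma pe_cong: "pres_eq R u v \<Longrightarrow> pres_eq R (x @ u @ y) (x @ v @ y)"
proof (induction rule: pres_eq.induct)
  case (pe_refl w) then show ?case by (rule pres_eq.pe_refl)
next
  case (pe_sym u v) then show ?case by (metis pres_eq.pe_sym)
next
  case (pe_trans u v w) then show ?case by (metis pres_eq.pe_trans)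
next
  case (pe_cancel u a v)
  have "pres_eq R ((x @ u) @ [a, inv_letter a] @ (v @ y)) ((x @ u) @ (v @ y))" by (rule pres_eq.pe_cancel)
  then show ?case by simp
next
  case (pe_rel r u v)
  have "pres_eq R ((x @ u) @ r @ (v @ y)) ((x @ u) @ (v @ y))" using pe_rel by (rule pres_eq.pe_rel)
  then show ?case by simp
qed

lemmas [trans] = pe_trans

lemma pe_congL: "pres_eq R u v \<Longrightarrow> pres_eq R (x @ u) (x @ v)"
  using pe_cong[of R u v x "[]"] by simp
lemma pe_congR: "pres_eq R u v \<Longrightarrow> pres_eq R (u @ y) (v @ y)"
  using pe_cong[of R u v "[]" y] by simp
lemma pe_cancel0: "pres_eq R ([x, inv_letter x]) []"
  using pe_cancel[of R "[]" x "[]"] by simp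
lemma pe_cancel1: "pres_eq R (u @ [x, inv_letter x] @ v) (u @ v)"
  by (rule pe_cancel)
lemma pe_cancel2: "pres_eq R (u @ [inv_letter x, x] @ v) (u @ v)"
  using pe_cancel[of R u "inv_letter x" v] by (simp add: inv_letter_def)

definition gpow :: "nat \<Rightarrow> int \<Rightarrow> word" where
  "gpow g n = (if 0 \<le> n then replicate (nat n) (g, False) else replicate (nat (- n)) (g, True))"

lemma apow_gpow: "apow = gpow 0"
  by (auto simp: apow_def gpow_def fun_eq_iff)

lemma gpow_0[simp]: "gpow g 0 = []" by (simp add: gpow_def)
lemma gpow_neg: "z \<le> 0 \<Longrightarrow> gpow g z = replicate (nat (- z)) (g, True)"
  by (auto simp: gpow_def)
lemma gpow_pos: "0 \<le> z \<Longrightarrow> gpow g z = replicate (nat z) (g, False)"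
  by (auto simp: gpow_def)
lemma rep_snoc: "replicate (Suc k) a = replicate k a @ [a]"
  by (simp add: replicate_append_same)

lemma gpow_stepF: "pres_eq R (gpow g z @ [(g, False)]) (gpow g (z + 1))"
proof (cases "0 \<le> z")
  case True
  then have "gpow g z @ [(g, False)] = gpow g (z + 1)"
  proof -
    have "nat (z + 1) = Suc (nat z)" using True by simp
    then show ?thesis using True by (simp add: gpow_pos rep_snoc replicate_append_same)
  qed
  then show ?thesis by (simp add: pe_refl)
next
  case False
  then have e: "gpow g z = gpow g (z + 1) @ [(g, True)]"
  proof -
    have "nat (- z) = Suc (nat (- (z + 1)))" using False by simp
    then show ?thesis using False by (simp add: gpow_neg rep_snoc replicate_append_same)
  qed
  show ?thesis unfolding e using pe_cancel[of R "gpow g (z + 1)" "(g, True)" "[]"]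
    by (simp add: inv_letter_def)
qed

lemma gpow_stepT: "pres_eq R (gpow g z @ [(g, True)]) (gpow g (z - 1))"
proof (cases "0 < z")
  case False
  then have "gpow g z @ [(g, True)] = gpow g (z - 1)"
  proof -
    have "nat (- (z - 1)) = Suc (nat (- z))" using False by simp
    then show ?thesis using False by (simp add: gpow_neg rep_snoc replicate_append_same)
  qed
  then show ?thesis by (simp add: pe_refl)
next
  case True
  then have e: "gpow g z = gpow g (z - 1) @ [(g, False)]"
  proof -
    have "nat z = Suc (nat (z - 1))" using True by simp
    then show ?thesis using True by (simp add: gpow_pos rep_snoc replicate_append_same)
  qed
  show ?thesis unfolding e using pe_cancel[of R "gpow g (z - 1)" "(g, False)" "[]"]
    by (simp add: inv_letter_def)
qed

lemma gpow_add: "pres_eq R (gpow g x @ gpow g y) (gpow g (x + y))"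
proof (induction y rule: int_induct[where k=0])
  case base then show ?case by (simp add: pe_refl)
next
  case (step1 y)
  have "pres_eq R (gpow g x @ gpow g (y + 1)) (gpow g x @ gpow g y @ [(g, False)])"
    by (rule pe_congL, rule pe_sym, rule gpow_stepF)
  also have "pres_eq R (gpow g x @ gpow g y @ [(g, False)]) (gpow g (x + y) @ [(g, False)])"
    using pe_congR[OF step1(2), of "[(g, False)]"] by simp
  also have "pres_eq R (gpow g (x + y) @ [(g, False)]) (gpow g (x + (y + 1)))"
    using gpow_stepF[of R g "x + y"] by (simp add: add.assoc)
  finally show ?case .
next
  case (step2 y)
  have "pres_eq R (gpow g x @ gpow g (y - 1)) (gpow g x @ gpow g y @ [(g, True)])"
    by (rule pe_congL, rule pe_sym, rule gpow_stepT)
  also have "pres_eq R (gpow g x @ gpow g y @ [(g, True)]) (gpow g (x + y) @ [(g, True)])"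
    using pe_congR[OF step2(2), of "[(g, True)]"] by simp
  also have "pres_eq R (gpow g (x + y) @ [(g, True)]) (gpow g (x + (y - 1)))"
    using gpow_stepT[of R g "x + y"] by (simp add: add_diff_eq)
  finally show ?case .
qed

lemma gpow_add': "pres_eq R (u @ gpow g x @ gpow g y @ v) (u @ gpow g (x + y) @ v)"
  using pe_cong[OF gpow_add[of R g x y], of u v] by simp



type_synonym state = "(int \<times> letter) list \<times> int \<times> int"

definition hnn :: "(int \<times> letter) list \<Rightarrow> int \<Rightarrow> int \<Rightarrow> letter \<Rightarrow> (int \<times> letter) list \<times> int" where
  "hnn L r d l = (case L of [] \<Rightarrow> ([(r, l)], d)
     | (x, l') # L' \<Rightarrow> (if l' = inv_letter l \<and> r = 0 then (L', x + d) else ((r, l) # L, d)))"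

definition act :: "(nat \<Rightarrow> int) \<Rightarrow> letter \<Rightarrow> state \<Rightarrow> state" where
  "act n l N = (case N of (L, p, q) \<Rightarrow> (case l of (g, e) \<Rightarrow>
     if g = 0 then (L, p + (if e then -1 else 1), q)
     else if g = 1 then (L, p, q + (if e then -1 else 1))
     else (case hnn L (if e then p - n (g - 1) * q else p) (if e then 0 else n (g - 1) * q) l of
            (L', p') \<Rightarrow> (L', p', q))))"

fun red :: "(int \<times> letter) list \<Rightarrow> bool" where
  "red [] = True"
| "red [_] = True"
| "red ((x, l) # (x', l') # L) = (\<not> (l = inv_letter l' \<and> x = 0) \<and> red ((x', l') # L))"

definition actw :: "(nat \<Rightarrow> int) \<Rightarrow> word \<Rightarrow> state \<Rightarrow> state" where
  "actw n w N = foldl (\<lambda>N x. act n x N) N w"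

lemma actw_Nil[simp]: "actw n [] N = N" by (simp add: actw_def)
lemma actw_Cons[simp]: "actw n (x # w) N = actw n w (act n x N)" by (simp add: actw_def)
lemma actw_append[simp]: "actw n (u @ w) N = actw n w (actw n u N)" by (simp add: actw_def)

lemma red_tl: "red (a # L) \<Longrightarrow> red L"
  by (cases a; cases L) auto

lemma inv_inv[simp]: "inv_letter (inv_letter l) = l" by (simp add: inv_letter_def)

lemma hnn_red: "red L \<Longrightarrow> red (fst (hnn L r d l))"
  by (cases L) (auto simp: hnn_def red_tl)

lemma hnn_red': "red L \<Longrightarrow> hnn L r d l = (L', p') \<Longrightarrow> red L'"
  using hnn_red[of L r d l] by simp

lemma act_red: "red (fst N) \<Longrightarrow> red (fst (act n l N))"
  by (cases N; cases l) (auto simp: act_def split: prod.splits intro: hnn_red')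

lemma act_inv: assumes "red L" shows "act n (inv_letter l) (act n l (L, p, q)) = (L, p, q)"
proof -
  obtain g e where l: "l = (g, e)" by (cases l)
  show ?thesis
  proof (cases "g \<le> 1")
    case True then show ?thesis unfolding l by (auto simp: act_def inv_letter_def)
  next
    case False
    show ?thesis
    proof (cases L)
      case Nil then show ?thesis using False unfolding l by (auto simp: act_def inv_letter_def hnn_def)
    next
      case (Cons a L2)
      obtain x l' where a: "a = (x, l')" by (cases a)
      show ?thesis
      proof (cases L2)
        case Nil then show ?thesis using False unfolding l Cons a
          by (auto simp: act_def inv_letter_def hnn_def algebra_simps)
      next
        case (Cons b L3)
        obtain x2 l2 where b: "b = (x2, l2)" by (cases b)
        show ?thesis using False assms unfolding l \<open>L = a # L2\<close> Cons a b
          by (auto simp: act_def inv_letter_def hnn_def algebra_simps)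
      qed
    qed
  qed
qed

lemma actw_rep0: "actw n (replicate k (0, e)) (L, p, q) = (L, p + (if e then - int k else int k), q)"
  by (induction k arbitrary: p) (auto simp: act_def algebra_simps)

lemma actw_apow: "actw n (apow z) (L, p, q) = (L, p + z, q)"
  by (auto simp: apow_def actw_rep0)

lemma rel_triv: assumes "red L" "r \<in> G_relators k n" shows "actw n r (L, p, q) = (L, p, q)"
proof -
  consider "r = [(0, False), (1, False), (0, True), (1, True)]"
    | i where "1 \<le> i" "r = [(i + 1, True), (1, False), (i + 1, False), (1, True)] @ apow (- n i)"
    using assms(2) unfolding G_relators_def by blast
  then show ?thesis
  proof cases
    case 1 then show ?thesis by (simp add: act_def)
  next
    case (2 i)
    let ?w = "[(i + 1, True), (1, False), (i + 1, False), (1, True)]"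
    have "actw n ?w (L, p, q) = (L, p + n i, q)"
    proof (cases L)
      case Nil then show ?thesis using 2 by (auto simp: act_def inv_letter_def hnn_def algebra_simps)
    next
      case (Cons a L2)
      obtain x l' where a: "a = (x, l')" by (cases a)
      show ?thesis
      proof (cases L2)
        case Nil then show ?thesis using 2 unfolding Cons a
          by (auto simp: act_def inv_letter_def hnn_def algebra_simps)
      next
        case (Cons b L3)
        obtain x2 l2 where b: "b = (x2, l2)" by (cases b)
        show ?thesis using 2 assms unfolding \<open>L = a # L2\<close> Cons a b
          by (auto simp: act_def inv_letter_def hnn_def algebra_simps)
      qed
    qed
    then show ?thesis using 2 by (simp add: actw_apow)
  qed
qed

lemma act_red': "red L \<Longrightarrow> act n l (L, p, q) = (L', p', q') \<Longrightarrow> red L'"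
  using act_red[of "(L, p, q)" n l] by simp

lemma actw_red: "red (fst N) \<Longrightarrow> red (fst (actw n w N))"
proof (induction w arbitrary: N)
  case (Cons x w) then show ?case using act_red[OF Cons.prems, of n x] by simp
qed simp

lemma pres_act: "pres_eq (G_relators k n) u v \<Longrightarrow> red (fst N) \<Longrightarrow> actw n u N = actw n v N"
proof (induction arbitrary: N rule: pres_eq.induct)
  case (pe_refl w) then show ?case by simp
next
  case (pe_sym u v) then show ?case by metis
next
  case (pe_trans u v w) then show ?case by metis
next
  case (pe_cancel u x v)
  obtain L p q where "actw n u N = (L, p, q)" by (cases "actw n u N")
  moreover have "red L" using actw_red[OF pe_cancel, of n u] calculation by simp
  ultimately show ?case by (simp add: act_inv)
next
  case (pe_rel r u v)
  obtain L p q where "actw n u N = (L, p, q)" by (cases "actw n u N")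
  moreover have "red L" using actw_red[OF pe_rel(2), of n u] calculation by simp
  ultimately show ?case using rel_triv[OF _ pe_rel(1)] by simp
qed



definition commr :: "word set \<Rightarrow> letter \<Rightarrow> letter \<Rightarrow> bool" where
  "commr R x y \<longleftrightarrow> pres_eq R [x, y] [y, x]"

lemma commr_sym: "commr R x y \<Longrightarrow> commr R y x"
  unfolding commr_def by (rule pe_sym)

lemma commr_inv: "commr R x y \<Longrightarrow> commr R (inv_letter x) y"
  unfolding commr_def
proof -
  assume c: "pres_eq R [x, y] [y, x]"
  have "pres_eq R [inv_letter x, y] ([inv_letter x] @ [y, x] @ [inv_letter x])"
    using pe_cancel[of R "[inv_letter x, y]" x "[]"] by (simp add: pe_sym)
  also have "pres_eq R ([inv_letter x] @ [y, x] @ [inv_letter x]) ([inv_letter x] @ [x, y] @ [inv_letter x])"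
    using pe_cong[OF pe_sym[OF c]] by blast
  also have "pres_eq R ([inv_letter x] @ [x, y] @ [inv_letter x]) [y, inv_letter x]"
    using pe_cancel2[of R "[]" x "[y, inv_letter x]"] by simp
  finally show "pres_eq R [inv_letter x, y] [y, inv_letter x]" .
qed

lemma commr_word: "(\<forall>y\<in>set w. commr R x y) \<Longrightarrow> pres_eq R (x # w) (w @ [x])"
proof (induction w)
  case Nil then show ?case by (simp add: pe_refl)
next
  case (Cons y w)
  have "pres_eq R (x # y # w) ([y, x] @ w)"
    using pe_congR[of R "[x,y]" "[y,x]" w] Cons.prems by (simp add: commr_def)
  also have "pres_eq R ([y, x] @ w) ([y] @ w @ [x])"
    using pe_congL[OF Cons.IH, of "[y]"] Cons.prems by simp
  finally show ?case by simp
qed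

lemma commr_words: "(\<forall>x\<in>set u. \<forall>y\<in>set w. commr R x y) \<Longrightarrow> pres_eq R (u @ w) (w @ u)"
proof (induction u)
  case Nil then show ?case by (simp add: pe_refl)
next
  case (Cons x u)
  have "pres_eq R ([x] @ u @ w) ([x] @ w @ u)"
    using pe_congL[OF Cons.IH, of "[x]"] Cons.prems by simp
  also have "pres_eq R ([x] @ w @ u) (w @ [x] @ u)"
    using pe_congR[OF commr_word[of w R x], of u] Cons.prems by simp
  finally show ?case by simp
qed

lemma set_gpow: "y \<in> set (gpow g z) \<Longrightarrow> fst y = g"
  by (auto simp: gpow_def split: if_splits)

lemma pe_rel0: "r \<in> R \<Longrightarrow> pres_eq R (u @ r @ v) (u @ v)" by (rule pe_rel)

context fixes k :: nat and n :: "nat \<Rightarrow> int"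
begin

abbreviation peq (infix "\<approx>" 50) where "u \<approx> v \<equiv> pres_eq (G_relators k n) u v"

lemma comm_at: "commr (G_relators k n) (0, False) (1, False)"
  unfolding commr_def
proof -
  let ?r0 = "[(0::nat, False), (1::nat, False), (0, True), (1, True)]"
  have "[(0, False), (1, False)] \<approx> [(0, False), (1, False)] @ [(0, True), (0, False)]"
    using pe_cancel[of _ "[(0, False), (1, False)]" "(0, True)" "[]"] by (simp add: pe_sym inv_letter_def)
  also have "\<dots> \<approx> [(0, False), (1, False), (0, True)] @ [(1, True), (1, False)] @ [(0, False)]"
    using pe_cancel[of _ "[(0, False), (1, False), (0, True)]" "(1, True)" "[(0, False)]"] by (simp add: pe_sym inv_letter_def)
  also have "\<dots> \<approx> [(1, False), (0, False)]"
    using pe_rel[of ?r0 "G_relators k n" "[]" "[(1, False), (0, False)]"] by (simp add: G_relators_def)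
  finally show "[(0, False), (1, False)] \<approx> [(1, False), (0, False)]" .
qed

lemma comm_at_all: "fst x = 0 \<Longrightarrow> fst y = 1 \<Longrightarrow> commr (G_relators k n) x y"
proof -
  assume x: "fst x = 0" and y: "fst y = 1"
  have a: "commr (G_relators k n) (0, e) (1, False)" for e
    using comm_at commr_inv[OF comm_at] by (cases e) (auto simp: inv_letter_def)
  have "commr (G_relators k n) (0, e) (1, e')" for e e'
    using commr_sym[OF a] commr_inv[OF commr_sym[OF a]] by (cases e') (auto simp: inv_letter_def intro: commr_sym)
  then show ?thesis using x y by (cases x; cases y) auto
qed

lemma comm_at_words: "(\<forall>x\<in>set u. fst x = 0) \<Longrightarrow> (\<forall>y\<in>set w. fst y = 1) \<Longrightarrow> u @ w \<approx> w @ u"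
  by (rule commr_words) (blast intro: comm_at_all)

lemma comm_ta_words: "(\<forall>x\<in>set u. fst x = 1) \<Longrightarrow> (\<forall>y\<in>set w. fst y = 0) \<Longrightarrow> u @ w \<approx> w @ u"
  using comm_at_words[of w u] by (simp add: pe_sym)

lemma apow_t: "apow p @ gpow 1 q \<approx> gpow 1 q @ apow p"
  by (rule comm_at_words) (auto simp: apow_gpow dest: set_gpow)

lemma pe_mid: "u \<approx> v \<Longrightarrow> x @ u @ y \<approx> x @ v @ y" by (rule pe_cong)

lemma apow_cancel: "apow z @ apow (- z) \<approx> []"
  using gpow_add[of _ 0 z "- z"] by (simp add: apow_gpow)

lemma rel_tb: assumes "1 \<le> i" "i \<le> k"
  shows "[(1, False), (i + 1, False)] \<approx> [(i + 1, False)] @ apow (n i) @ [(1, False)]"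
proof -
  let ?b = "(i + 1, False)" let ?bi = "(i + 1, True)" let ?t = "(1::nat, False)" let ?ti = "(1::nat, True)"
  have rel: "[?bi, ?t, ?b, ?ti] @ apow (- n i) \<in> G_relators k n" using assms unfolding G_relators_def by blast
  have "[?t, ?b] \<approx> [?b, ?bi] @ [?t, ?b]"
    using pe_cancel[of _ "[]" ?b "[?t, ?b]"] by (simp add: pe_sym inv_letter_def)
  also have "\<dots> \<approx> [?b, ?bi, ?t, ?b] @ [?ti, ?t] @ []"
    using pe_cancel[of _ "[?b, ?bi, ?t, ?b]" ?ti "[]"] by (simp add: pe_sym inv_letter_def)
  also have "\<dots> \<approx> [?b, ?bi, ?t, ?b, ?ti] @ (apow (- n i) @ apow (n i)) @ [?t]"
    using pe_mid[OF pe_sym[OF apow_cancel[of "- n i"]], of "[?b, ?bi, ?t, ?b, ?ti]" "[?t]"] by simp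
  also have "\<dots> = [?b] @ ([?bi, ?t, ?b, ?ti] @ apow (- n i)) @ (apow (n i) @ [?t])" by simp
  also have "\<dots> \<approx> [?b] @ apow (n i) @ [?t]"
    using pe_rel[OF rel, of "[?b]" "apow (n i) @ [?t]"] by simp
  finally show ?thesis .
qed

lemma rel_tb': assumes "1 \<le> i" "i \<le> k"
  shows "[(1, True), (i + 1, False)] \<approx> [(i + 1, False)] @ apow (- n i) @ [(1, True)]"
proof -
  let ?b = "(i + 1, False)" let ?t = "(1::nat, False)" let ?ti = "(1::nat, True)"
  have "[?ti, ?b] \<approx> [?ti] @ ([?b] @ apow (n i) @ [?t]) @ [?ti] @ apow (- n i)"
  proof -
    have "[?b] @ apow (n i) @ [?t] @ [?ti] @ apow (- n i) \<approx> [?b] @ apow (n i) @ apow (- n i)"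
      using pe_cancel[of _ "[?b] @ apow (n i)" ?t "apow (- n i)"] by (simp add: inv_letter_def)
    also have "\<dots> \<approx> [?b] @ [] @ []" using pe_mid[OF apow_cancel[of "n i"], of "[?b]" "[]"] by simp
    finally have "[?b] @ apow (n i) @ [?t] @ [?ti] @ apow (- n i) \<approx> [?b]" by simp
    from pe_congL[OF pe_sym[OF this], of "[?ti]"] show ?thesis by simp
  qed
  also have "\<dots> \<approx> [?ti] @ [?t, ?b] @ ([?ti] @ apow (- n i))"
    using pe_mid[OF pe_sym[OF rel_tb[OF assms]], of "[?ti]" "[?ti] @ apow (- n i)"] by simp
  also have "\<dots> \<approx> [?b] @ [?ti] @ apow (- n i)"
    using pe_cancel[of _ "[]" ?ti "[?b] @ [?ti] @ apow (- n i)"] by (simp add: inv_letter_def)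
  also have "\<dots> \<approx> [?b] @ apow (- n i) @ [?ti]"
  proof -
    have "[?ti] @ apow (- n i) \<approx> apow (- n i) @ [?ti]" by (intro comm_ta_words) (auto simp: apow_gpow dest: set_gpow)
    from pe_mid[OF this, of "[?b]" "[]"] show ?thesis by simp
  qed
  finally show ?thesis .
qed

lemma shift_step:
  assumes y: "[y, b] \<approx> [b] @ apow c @ [y]" "fst y = 1"
    and W: "W @ [b] \<approx> [b] @ apow d @ W" "\<forall>x\<in>set W. fst x = 1"
  shows "W @ [y] @ [b] \<approx> [b] @ apow (d + c) @ W @ [y]"
proof -
  have "W @ [y] @ [b] \<approx> W @ ([b] @ apow c @ [y])" using pe_congL[OF y(1), of W] by simp
  also have "\<dots> = (W @ [b]) @ apow c @ [y]" by simp
  also have "\<dots> \<approx> ([b] @ apow d @ W) @ apow c @ [y]" using pe_congR[OF W(1)] by simp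
  also have "\<dots> = ([b] @ apow d) @ (W @ apow c) @ [y]" by simp
  also have "\<dots> \<approx> ([b] @ apow d) @ (apow c @ W) @ [y]"
  proof -
    have "W @ apow c \<approx> apow c @ W" using W(2) by (intro comm_ta_words) (auto simp: apow_gpow dest: set_gpow)
    then show ?thesis by (rule pe_mid)
  qed
  also have "\<dots> = [b] @ (apow d @ apow c) @ W @ [y]" by simp
  also have "\<dots> \<approx> [b] @ apow (d + c) @ W @ [y]" using pe_mid[OF gpow_add[of _ 0 d c], of "[b]" "W @ [y]"] by (simp add: apow_gpow)
  finally show ?thesis .
qed

lemma X: assumes "1 \<le> i" "i \<le> k"
  shows "gpow 1 q @ [(i + 1, False)] \<approx> [(i + 1, False)] @ apow (n i * q) @ gpow 1 q"
proof (induction q rule: int_induct[where k=0])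
  case base then show ?case by (simp add: apow_def pe_refl)
next
  case (step1 q)
  have "gpow 1 (q + 1) @ [(i + 1, False)] \<approx> gpow 1 q @ [(1, False)] @ [(i + 1, False)]"
    using pe_congR[OF pe_sym[OF gpow_stepF[of _ 1 q]]] by simp
  also have "\<dots> \<approx> [(i + 1, False)] @ apow (n i * q + n i) @ gpow 1 q @ [(1, False)]"
    by (rule shift_step[OF rel_tb[OF assms] _ step1(2)]) (auto dest: set_gpow)
  also have "\<dots> \<approx> [(i + 1, False)] @ apow (n i * (q + 1)) @ gpow 1 (q + 1)"
    using pe_mid[OF gpow_stepF[of _ 1 q], of "[(i + 1, False)] @ apow (n i * q + n i)" "[]"]
    by (simp add: algebra_simps)
  finally show ?case .
next
  case (step2 q)
  have "gpow 1 (q - 1) @ [(i + 1, False)] \<approx> gpow 1 q @ [(1, True)] @ [(i + 1, False)]"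
    using pe_congR[OF pe_sym[OF gpow_stepT[of _ 1 q]]] by simp
  also have "\<dots> \<approx> [(i + 1, False)] @ apow (n i * q + - n i) @ gpow 1 q @ [(1, True)]"
    by (rule shift_step[OF rel_tb'[OF assms] _ step2(2)]) (auto dest: set_gpow)
  also have "\<dots> \<approx> [(i + 1, False)] @ apow (n i * (q - 1)) @ gpow 1 (q - 1)"
    using pe_mid[OF gpow_stepT[of _ 1 q], of "[(i + 1, False)] @ apow (n i * q + - n i)" "[]"]
    by (simp add: algebra_simps)
  finally show ?case .
qed

lemma Y: assumes "1 \<le> i" "i \<le> k"
  shows "apow (n i * q) @ gpow 1 q @ [(i + 1, True)] \<approx> [(i + 1, True)] @ gpow 1 q"
proof -
  let ?b = "(i + 1, False)" let ?bi = "(i + 1, True)"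
  have "apow (n i * q) @ gpow 1 q @ [?bi] \<approx> [?bi, ?b] @ apow (n i * q) @ gpow 1 q @ [?bi]"
    using pe_cancel[of _ "[]" ?bi "apow (n i * q) @ gpow 1 q @ [?bi]"] by (simp add: pe_sym inv_letter_def)
  also have "\<dots> = [?bi] @ ([?b] @ apow (n i * q) @ gpow 1 q) @ [?bi]" by simp
  also have "\<dots> \<approx> [?bi] @ (gpow 1 q @ [?b]) @ [?bi]" using pe_mid[OF pe_sym[OF X[OF assms]]] by blast
  also have "\<dots> \<approx> [?bi] @ gpow 1 q" using pe_cancel[of _ "[?bi] @ gpow 1 q" ?b "[]"] by (simp add: inv_letter_def)
  finally show ?thesis .
qed

end


definition pre :: "(int \<times> letter) list \<Rightarrow> word" where
  "pre L = concat (map (\<lambda>(x, l). apow x @ [l]) (rev L))"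

lemma pre_Nil[simp]: "pre [] = []" by (simp add: pre_def)
lemma pre_Cons[simp]: "pre ((x, l) # L) = pre L @ apow x @ [l]" by (simp add: pre_def)

definition word_of :: "state \<Rightarrow> word" where
  "word_of N = (case N of (L, p, q) \<Rightarrow> pre L @ apow p @ gpow 1 q)"

lemma apow0[simp]: "apow 0 = []" by (simp add: apow_def)

lemma hnn_word: "pres_eq R (pre L @ apow r @ [l] @ apow d @ W) (case hnn L r d l of (L', p') \<Rightarrow> pre L' @ apow p' @ W)"
proof (cases L)
  case Nil then show ?thesis by (simp add: hnn_def pe_refl)
next
  case (Cons a L2)
  obtain x l' where a: "a = (x, l')" by (cases a)
  show ?thesis
  proof (cases "l' = inv_letter l \<and> r = 0")
    case True
    then have "pre L @ apow r @ [l] @ apow d @ W = pre L2 @ apow x @ [inv_letter l, l] @ apow d @ W"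
      using Cons a by simp
    also have "pres_eq R \<dots> ((pre L2 @ apow x) @ apow d @ W)" using pe_cancel2[of R "pre L2 @ apow x" l "apow d @ W"] by simp
    also have "pres_eq R \<dots> (pre L2 @ apow (x + d) @ W)"
      using gpow_add'[of R "pre L2" 0 x d W] by (simp add: apow_gpow)
    finally show ?thesis using True Cons a by (simp add: hnn_def)
  next
    case False then show ?thesis using Cons a by (auto simp: hnn_def pe_refl)
  qed
qed

context fixes k :: nat and n :: "nat \<Rightarrow> int"
begin

lemma act_word: assumes "fst l < k + 2"
  shows "pres_eq (G_relators k n) (word_of N @ [l]) (word_of (act n l N))"
proof -
  obtain L p q where N: "N = (L, p, q)" by (cases N)
  obtain g e where l: "l = (g, e)" by (cases l)
  let ?R = "G_relators k n"
  consider "g = 0" | "g = 1" | "g \<ge> 2" by linarith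
  then show ?thesis
  proof cases
    case 1
    have c: "pres_eq ?R (gpow 1 q @ [(0, e)]) ([(0, e)] @ gpow 1 q)"
      by (rule comm_ta_words) (auto dest: set_gpow)
    have "pres_eq ?R (pre L @ apow p @ gpow 1 q @ [(0, e)]) (pre L @ (apow p @ [(0, e)]) @ gpow 1 q)"
      using pe_mid[OF c, of "pre L @ apow p" "[]"] by simp
    also have "pres_eq ?R \<dots> (pre L @ apow (p + (if e then -1 else 1)) @ gpow 1 q)"
      using pe_mid[OF gpow_stepF[of ?R 0 p], of "pre L" "gpow 1 q"]
            pe_mid[OF gpow_stepT[of ?R 0 p], of "pre L" "gpow 1 q"]
      by (cases e) (auto simp: apow_gpow)
    finally show ?thesis using 1 unfolding N l by (simp add: word_of_def act_def)
  next
    case 2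
    have "pres_eq ?R (pre L @ apow p @ gpow 1 q @ [(1, e)]) (pre L @ apow p @ gpow 1 (q + (if e then -1 else 1)))"
      using pe_mid[OF gpow_stepF[of ?R 1 q], of "pre L @ apow p" "[]"]
            pe_mid[OF gpow_stepT[of ?R 1 q], of "pre L @ apow p" "[]"]
      by (cases e) auto
    then show ?thesis using 2 unfolding N l by (simp add: word_of_def act_def)
  next
    case 3
    define i where "i = g - 1"
    have i: "1 \<le> i" "i \<le> k" "g = i + 1" using 3 assms l unfolding i_def by auto
    show ?thesis
    proof (cases e)
      case False
      have "pres_eq ?R (pre L @ apow p @ gpow 1 q @ [(g, e)]) (pre L @ apow p @ [l] @ apow (n i * q) @ gpow 1 q)"
        using pe_mid[OF X[OF i(1,2), of n q], of "pre L @ apow p" "[]"] False i l by simp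
      also have "pres_eq ?R \<dots> (case hnn L p (n i * q) l of (L', p') \<Rightarrow> pre L' @ apow p' @ gpow 1 q)"
        by (rule hnn_word)
      finally show ?thesis using False 3 i unfolding N l
        by (simp add: word_of_def act_def split: prod.splits)
    next
      case True
      have "pres_eq ?R (pre L @ apow p @ gpow 1 q @ [(g, e)]) (pre L @ (apow (p - n i * q) @ apow (n i * q)) @ gpow 1 q @ [(g, e)])"
        using pe_mid[OF pe_sym[OF gpow_add[of ?R 0 "p - n i * q" "n i * q"]], of "pre L" "gpow 1 q @ [(g, e)]"]
        by (simp add: apow_gpow)
      also have "pres_eq ?R \<dots> (pre L @ apow (p - n i * q) @ [l] @ gpow 1 q)"
        using pe_mid[OF Y[OF i(1,2), of n q], of "pre L @ apow (p - n i * q)" "[]"] True i l by simp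
      also have "\<dots> = pre L @ apow (p - n i * q) @ [l] @ apow 0 @ gpow 1 q" by simp
      also have "pres_eq ?R \<dots> (case hnn L (p - n i * q) 0 l of (L', p') \<Rightarrow> pre L' @ apow p' @ gpow 1 q)"
        by (rule hnn_word)
      finally show ?thesis using True 3 i unfolding N l
        by (simp add: word_of_def act_def split: prod.splits)
    qed
  qed
qed

lemma actw_word: "\<forall>x\<in>set w. fst x < k + 2 \<Longrightarrow>
  pres_eq (G_relators k n) (word_of N @ w) (word_of (actw n w N))"
proof (induction w arbitrary: N)
  case Nil then show ?case by (simp add: pe_refl)
next
  case (Cons x w)
  have "pres_eq (G_relators k n) (word_of N @ [x] @ w) (word_of (act n x N) @ w)"
    using pe_congR[OF act_word[of x N]] Cons.prems by simp
  also have "pres_eq (G_relators k n) \<dots> (word_of (actw n w (act n x N)))"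
    using Cons by simp
  finally show ?case by simp
qed

theorem trivial_iff: "\<forall>x\<in>set w. fst x < k + 2 \<Longrightarrow>
  pres_eq (G_relators k n) w [] \<longleftrightarrow> actw n w ([], 0, 0) = ([], 0, 0)"
proof
  assume "pres_eq (G_relators k n) w []"
  from pres_act[OF this, of "([], 0, 0)"] show "actw n w ([], 0, 0) = ([], 0, 0)" by simp
next
  assume a: "\<forall>x\<in>set w. fst x < k + 2" "actw n w ([], 0, 0) = ([], 0, 0)"
  from actw_word[OF a(1), of "([], 0, 0)"] a(2)
  show "pres_eq (G_relators k n) w []" by (simp add: word_of_def)
qed

end


abbreviation "pf c \<equiv> fst (prod_decode c)"
abbreviation "ps c \<equiv> snd (prod_decode c)"
abbreviation "pe a b \<equiv> prod_encode (a, b)"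

definition dint :: "nat \<Rightarrow> int" where "dint c = int (pf c) - int (ps c)"
definition dlet :: "nat \<Rightarrow> letter" where "dlet c = (pf c, ps c = 1)"
definition dent :: "nat \<Rightarrow> int \<times> letter" where "dent c = (dint (pf c), dlet (ps c))"
definition dstk :: "nat \<Rightarrow> (int \<times> letter) list" where "dstk c = map dent (list_decode c)"
definition dst :: "nat \<Rightarrow> state" where "dst c = (dstk (pf c), dint (pf (ps c)), dint (ps (ps c)))"

definition iadd :: "nat \<Rightarrow> nat \<Rightarrow> nat" where "iadd a b = pe (pf a + pf b) (ps a + ps b)"
definition isub :: "nat \<Rightarrow> nat \<Rightarrow> nat" where "isub a b = pe (pf a + ps b) (ps a + pf b)"
definition imul :: "nat \<Rightarrow> nat \<Rightarrow> nat \<Rightarrow> nat" where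
  "imul mp mn a = pe (mp * pf a + mn * ps a) (mp * ps a + mn * pf a)"

lemma dint_iadd[simp]: "dint (iadd a b) = dint a + dint b" by (simp add: dint_def iadd_def)
lemma dint_isub[simp]: "dint (isub a b) = dint a - dint b" by (simp add: dint_def isub_def)
lemma dint_imul[simp]: "dint (imul mp mn a) = (int mp - int mn) * dint a"
  by (simp add: dint_def imul_def algebra_simps)
lemma dint_pe[simp]: "dint (pe a b) = int a - int b" by (simp add: dint_def)
lemma dint_zero: "dint a = 0 \<longleftrightarrow> pf a = ps a" by (simp add: dint_def)

definition TP :: "nat \<Rightarrow> (nat \<Rightarrow> int) \<Rightarrow> nat \<Rightarrow> nat" where
  "TP K n g = (if g < K then nat (n (g - 1)) else 0)"
definition TN :: "nat \<Rightarrow> (nat \<Rightarrow> int) \<Rightarrow> nat \<Rightarrow> nat" where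
  "TN K n g = (if g < K then nat (- n (g - 1)) else 0)"

lemma rf_TP: "rf m f \<Longrightarrow> rf m (\<lambda>xs. TP K n (f xs))"
  unfolding TP_def by (rule rf_table)
lemma rf_TN: "rf m f \<Longrightarrow> rf m (\<lambda>xs. TN K n (f xs))"
  unfolding TN_def by (rule rf_table)

definition actN :: "nat \<Rightarrow> (nat \<Rightarrow> int) \<Rightarrow> nat \<Rightarrow> nat \<Rightarrow> nat" where
  "actN K n l st = (
     if pf l = 0 then pe (pf st) (pe (iadd (pf (ps st)) (if ps l = 1 then pe 0 1 else pe 1 0)) (ps (ps st)))
     else if pf l = 1 then pe (pf st) (pe (pf (ps st)) (iadd (ps (ps st)) (if ps l = 1 then pe 0 1 else pe 1 0)))
     else (let MQ = imul (TP K n (pf l)) (TN K n (pf l)) (ps (ps st));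
               D = (if ps l = 1 then pe 0 0 else MQ);
               Rr = (if ps l = 1 then isub (pf (ps st)) MQ else pf (ps st));
               top = pf (pf st - 1)
           in if pf st \<noteq> 0 \<and> pf (ps top) = pf l \<and> ((ps (ps top) = 1) = (\<not> ps l = 1)) \<and> pf Rr = ps Rr
              then pe (ps (pf st - 1)) (pe (iadd (pf top) D) (ps (ps st)))
              else pe (Suc (pe (pe Rr l) (pf st))) (pe D (ps (ps st)))))"

definition stepN :: "nat \<Rightarrow> (nat \<Rightarrow> int) \<Rightarrow> nat \<Rightarrow> nat" where
  "stepN K n ms = (if pf ms = 0 then ms else
     pe (ps (pf ms - 1))
        (pe (if pf (pf (pf ms - 1)) < K \<and> ps (pf (pf ms - 1)) \<le> 1 then pf (ps ms) else 0)
            (actN K n (pf (pf ms - 1)) (ps (ps ms)))))"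

definition initN :: "nat \<Rightarrow> nat" where
  "initN x = pe x (pe 1 (pe 0 (pe (pe 0 0) (pe 0 0))))"

definition finalN :: "nat \<Rightarrow> nat" where
  "finalN ms = (if pf (ps ms) = 1 \<and> pf (ps (ps ms)) = 0 \<and> pf (pf (ps (ps (ps ms)))) = ps (pf (ps (ps (ps ms))))
      \<and> pf (ps (ps (ps (ps ms)))) = ps (ps (ps (ps (ps ms)))) then 1 else 0)"

definition decN :: "nat \<Rightarrow> (nat \<Rightarrow> int) \<Rightarrow> nat \<Rightarrow> nat" where
  "decN K n x = finalN ((stepN K n ^^ x) (initN x))"

lemma rf_hd: "rf 1 (\<lambda>xs. hd xs)"
proof -
  have "rf 1 (\<lambda>xs. xs ! 0)" by (rule rf_proj) simp
  moreover have "\<forall>xs. length xs = 1 \<longrightarrow> xs ! 0 = hd xs" by (metis hd_conv_nth list.size(3) zero_neq_one)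
  ultimately show ?thesis unfolding rf_def by metis
qed

lemma rf_unary: "rf 1 (\<lambda>xs. h (hd xs)) \<Longrightarrow> rf m f \<Longrightarrow> rf m (\<lambda>xs. h (f xs))"
  using rf_comp1[of "\<lambda>xs. h (hd xs)" m f] by simp

lemmas rf_rules = rf_if rfp_conj rfp_disj rfp_not rfp_iff rfp_eq rfp_less rfp_le
  rf_add rf_sub rf_mult rf_penc rf_pfst rf_psnd rf_suc rf_TP rf_TN rf_const rf_hd

lemma rf_actN: "rf m f \<Longrightarrow> rf m g \<Longrightarrow> rf m (\<lambda>xs. actN K n (f xs) (g xs))"
  unfolding actN_def Let_def iadd_def isub_def imul_def
  by (intro rf_rules; assumption?)

lemma rf_step: "rf 1 (\<lambda>xs. stepN K n (hd xs))"
  unfolding stepN_def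
  by (intro rf_rules rf_actN)

lemma rf_init: "rf 1 (\<lambda>xs. initN (hd xs))"
  unfolding initN_def by (intro rf_rules)

lemma rf_final: "rf 1 (\<lambda>xs. finalN (hd xs))"
  unfolding finalN_def by (intro rf_rules)

lemma rf_dec: "rf 1 (\<lambda>xs. decN K n (hd xs))"
  unfolding decN_def
  by (rule rf_unary[OF rf_final rf_iter[OF rf_step rf_init]])



lemma list_decode_Suc: "list_decode (Suc s) = pf s # list_decode (ps s)"
  by (simp split: prod.splits)

lemma dstk_0[simp]: "dstk 0 = []" by (simp add: dstk_def)
lemma dstk_Suc: "dstk (Suc s) = dent (pf s) # dstk (ps s)"
  unfolding dstk_def list_decode_Suc by simp
lemma dstk_Nil: "dstk c = [] \<longleftrightarrow> c = 0"
  by (cases c) (auto simp: dstk_Suc)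

lemma TPN: "g < K \<Longrightarrow> int (TP K n g) - int (TN K n g) = n (g - 1)"
  by (simp add: TP_def TN_def)

lemma actN_correct: assumes "pf l < K"
  shows "dst (actN K n l st) = act n (dlet l) (dst st)"
proof -
  consider "pf l = 0" | "pf l = 1" | "pf l \<ge> 2" by linarith
  then show ?thesis
  proof cases
    case 1 then show ?thesis by (simp add: actN_def act_def dst_def dlet_def)
  next
    case 2 then show ?thesis by (simp add: actN_def act_def dst_def dlet_def)
  next
    case 3
    define g where "g = pf l"
    define e where "e = (ps l = 1)"
    have le: "dlet l = (g, e)" by (simp add: dlet_def g_def e_def)
    define MQ where "MQ = imul (TP K n g) (TN K n g) (ps (ps st))"
    have dMQ: "dint MQ = n (g - 1) * dint (ps (ps st))" unfolding MQ_def
      using TPN[of g K n] assms by (simp add: g_def)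
    define D where "D = (if e then pe 0 0 else MQ)"
    define Rr where "Rr = (if e then isub (pf (ps st)) MQ else pf (ps st))"
    have dD: "dint D = (if e then 0 else n (g - 1) * dint (ps (ps st)))" by (simp add: D_def dMQ)
    have dR: "dint Rr = (if e then dint (pf (ps st)) - n (g - 1) * dint (ps (ps st)) else dint (pf (ps st)))"
      by (simp add: Rr_def dMQ)
    have A: "actN K n l st = (let top = pf (pf st - 1) in
              if pf st \<noteq> 0 \<and> pf (ps top) = g \<and> ((ps (ps top) = 1) = (\<not> e)) \<and> pf Rr = ps Rr
              then pe (ps (pf st - 1)) (pe (iadd (pf top) D) (ps (ps st)))
              else pe (Suc (pe (pe Rr l) (pf st))) (pe D (ps (ps st))))"
      using 3 unfolding actN_def MQ_def D_def Rr_def g_def e_def Let_def by simp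
    have B: "act n (dlet l) (dst st) = (case hnn (dstk (pf st)) (dint Rr) (dint D) (g, e) of (L', p') \<Rightarrow> (L', p', dint (ps (ps st))))"
      using 3 unfolding le by (simp add: act_def dst_def dD dR g_def)
    show ?thesis
    proof (cases "pf st")
      case 0
      then show ?thesis unfolding A B by (simp add: hnn_def dst_def dstk_Suc dent_def le)
    next
      case (Suc s)
      show ?thesis unfolding A B using Suc
        by (auto simp: hnn_def dst_def dstk_Suc dent_def dlet_def le inv_letter_def dint_zero g_def e_def)
    qed
  qed
qed

definition validc :: "nat \<Rightarrow> nat \<Rightarrow> bool" where "validc K c \<longleftrightarrow> pf c < K \<and> ps c \<le> 1"

lemma stepN_run:
  "\<exists>st'. (stepN K n ^^ length l) (pe (list_encode l) (pe ok st)) = pe 0 (pe (if (\<forall>c\<in>set l. validc K c) then ok else 0) st')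
     \<and> ((\<forall>c\<in>set l. validc K c) \<longrightarrow> dst st' = actw n (map dlet l) (dst st))"
proof (induction l arbitrary: ok st)
  case Nil then show ?case by simp
next
  case (Cons c l)
  have s1: "stepN K n (pe (list_encode (c # l)) (pe ok st)) = pe (list_encode l) (pe (if validc K c then ok else 0) (actN K n c st))"
    by (simp add: stepN_def validc_def)
  obtain st' where st': "(stepN K n ^^ length l) (pe (list_encode l) (pe (if validc K c then ok else 0) (actN K n c st)))
      = pe 0 (pe (if (\<forall>c\<in>set l. validc K c) then (if validc K c then ok else 0) else 0) st')"
    "(\<forall>c\<in>set l. validc K c) \<longrightarrow> dst st' = actw n (map dlet l) (dst (actN K n c st))"
    using Cons.IH by blast
  show ?case
  proof (intro exI conjI)
    show "(stepN K n ^^ length (c # l)) (pe (list_encode (c # l)) (pe ok st)) =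
      pe 0 (pe (if \<forall>c\<in>set (c # l). validc K c then ok else 0) st')"
      using st'(1) s1 by (simp add: funpow_Suc_right del: funpow.simps)
    show "(\<forall>c\<in>set (c # l). validc K c) \<longrightarrow> dst st' = actw n (map dlet (c # l)) (dst st)"
      using st'(2) actN_correct[of c K n st] by (simp add: validc_def)
  qed
qed

lemma stepN_fix: "pf ms = 0 \<Longrightarrow> (stepN K n ^^ j) ms = ms"
  by (induction j) (auto simp: stepN_def)

lemma len_le_code: "length (list_decode x) \<le> x"
proof -
  have "length l \<le> list_encode l" for l
    by (induction l) (auto, metis le_prod_encode_2 le_trans)
  from this[of "list_decode x"] show ?thesis by simp
qed

lemma decN_correct:
  "decN K n x = (if (\<forall>c\<in>set (list_decode x). validc K c) \<and> actw n (map dlet (list_decode x)) ([], 0, 0) = ([], 0, 0) then 1 else 0)"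
proof -
  let ?l = "list_decode x"
  obtain st' where st': "(stepN K n ^^ length ?l) (initN x) = pe 0 (pe (if (\<forall>c\<in>set ?l. validc K c) then 1 else 0) st')"
    "(\<forall>c\<in>set ?l. validc K c) \<longrightarrow> dst st' = actw n (map dlet ?l) (dst (pe 0 (pe (pe 0 0) (pe 0 0))))"
    using stepN_run[where K=K and n=n and l="?l" and ok=1 and st="pe 0 (pe (pe 0 0) (pe 0 0))"] unfolding initN_def by auto
  have "(stepN K n ^^ x) (initN x) = (stepN K n ^^ (x - length ?l)) ((stepN K n ^^ length ?l) (initN x))"
    using len_le_code[of x] by (metis funpow_add le_add_diff_inverse2 o_apply)
  also have "\<dots> = (stepN K n ^^ length ?l) (initN x)" using st'(1) by (simp add: stepN_fix)
  finally have F: "(stepN K n ^^ x) (initN x) = pe 0 (pe (if (\<forall>c\<in>set ?l. validc K c) then 1 else 0) st')"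
    using st'(1) by simp
  have d0: "dst (pe 0 (pe (pe 0 0) (pe 0 0))) = ([], 0, 0)" by (simp add: dst_def)
  have "dst st' = ([], 0, 0) \<longleftrightarrow> pf st' = 0 \<and> pf (pf (ps st')) = ps (pf (ps st')) \<and> pf (ps (ps st')) = ps (ps (ps st'))"
    by (simp add: dst_def dstk_Nil dint_zero)
  then show ?thesis unfolding decN_def F using st'(2) d0 by (auto simp: finalN_def)
qed



definition encl :: "letter \<Rightarrow> nat" where "encl = (\<lambda>(g, b). prod_encode (g, if b then 1 else 0))"

lemma encode_word_encl: "encode_word w = list_encode (map encl w)"
  by (simp add: encode_word_def encl_def)

lemma dlet_encl[simp]: "dlet (encl l) = l"
  by (cases l) (simp add: dlet_def encl_def)

lemma encl_dlet: "ps c \<le> 1 \<Longrightarrow> encl (dlet c) = c"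
proof -
  assume "ps c \<le> 1"
  then have "(if ps c = 1 then 1 else 0) = ps c" by auto
  then show ?thesis by (simp add: dlet_def encl_def)
qed

lemma validc_encl: "validc K (encl l) \<longleftrightarrow> fst l < K"
  by (cases l) (simp add: validc_def encl_def)

lemma mem_iff:
  "x \<in> encode_word ` {w. (\<forall>y\<in>set w. fst y < k + 2) \<and> pres_eq (G_relators k n) w []} \<longleftrightarrow>
   (\<forall>c\<in>set (list_decode x). validc (k + 2) c) \<and> actw n (map dlet (list_decode x)) ([], 0, 0) = ([], 0, 0)"
proof
  assume "x \<in> encode_word ` {w. (\<forall>y\<in>set w. fst y < k + 2) \<and> pres_eq (G_relators k n) w []}"
  then obtain w where w: "x = encode_word w" "\<forall>y\<in>set w. fst y < k + 2" "pres_eq (G_relators k n) w []" by blast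
  have l: "list_decode x = map encl w" using w(1) by (simp add: encode_word_encl)
  have "map dlet (list_decode x) = w" unfolding l by (induction w) auto
  then show "(\<forall>c\<in>set (list_decode x). validc (k + 2) c) \<and> actw n (map dlet (list_decode x)) ([], 0, 0) = ([], 0, 0)"
    using w(2,3) trivial_iff[OF w(2)] l by (auto simp: validc_encl)
next
  assume a: "(\<forall>c\<in>set (list_decode x). validc (k + 2) c) \<and> actw n (map dlet (list_decode x)) ([], 0, 0) = ([], 0, 0)"
  define w where "w = map dlet (list_decode x)"
  have "map encl w = list_decode x" unfolding w_def using a
    by (simp add: map_idI encl_dlet validc_def comp_def)
  then have x: "x = encode_word w" by (simp add: encode_word_encl)
  have lt: "\<forall>y\<in>set w. fst y < k + 2" using a unfolding w_def by (auto simp: validc_def dlet_def)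
  have "pres_eq (G_relators k n) w []" using trivial_iff[OF lt] a unfolding w_def by simp
  then show "x \<in> encode_word ` {w. (\<forall>y\<in>set w. fst y < k + 2) \<and> pres_eq (G_relators k n) w []}"
    using x lt by blast
qed

theorem mainTheorem3:
  fixes k :: nat and n :: "nat \<Rightarrow> int"
  assumes "k \<ge> 1"
  shows "word_problem_solvable (k + 2) (G_relators k n)"
proof -
  obtain c where c: "\<forall>xs. length xs = 1 \<longrightarrow> eval c xs (decN (k + 2) n (hd xs))"
    using rf_dec[of "k + 2" n] unfolding rf_def by blast
  have "eval c [x] (if x \<in> encode_word ` {w. (\<forall>y\<in>set w. fst y < k + 2) \<and> pres_eq (G_relators k n) w []} then 1 else 0)" for x
    using c[rule_format, of "[x]"] unfolding mem_iff decN_correct by simp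
  then show ?thesis unfolding word_problem_solvable_def decidable_set_def by blast
qed

end
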